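(* Let $V$ be a finite dimensional normed vector space and $H\le O(V)$. Let $L_i:H\to\mathbb{R}$ be group-norms such that the functions $d_i(u,v)=\inf_{a\in H}\sqrt{L_i(a)^2+\|au-v\|^2}$ converge uniformly on compact sets to a semi-metric $d_\infty$ on $V$. Let $$G_0=\{g\in O(V):\ \exists\,a_i\in H\text{ with } a_i\to g \text{ and }\liminf_{i\to\infty}L_i(a_i)=0\}.$$ Then for $u,v\in V$, $d_\infty(u,v)=0$ if and only if $v=gu$ for some $g\in G_0$.
   Context: $O(V)$ is the group of norm-preserving linear maps of $V$. A group-norm on $H$ is $L:H\to\mathbb{R}$ with $L(a)\ge0$, $L(a)=0$ iff $a=e$, $L(a^{-1})=L(a)$, $L(ab)\le L(a)+L(b)$. *)

theory Defs
  imports "HOL-Analysis.Analysis" "HOL-Library.Liminf_Limsup"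
begin

definition orth_maps :: "('a::real_normed_vector \<Rightarrow> 'a) set" where
  "orth_maps = {f. linear f \<and> (\<forall>x. norm (f x) = norm x)}"

definition subgroup_O :: "('a::real_normed_vector \<Rightarrow> 'a) set \<Rightarrow> bool" where
  "subgroup_O H \<longleftrightarrow> H \<subseteq> orth_maps \<and> id \<in> H \<and>
     (\<forall>a\<in>H. \<forall>b\<in>H. a \<circ> b \<in> H) \<and> (\<forall>a\<in>H. inv a \<in> H)"

definition group_norm :: "('a \<Rightarrow> 'a) set \<Rightarrow> (('a \<Rightarrow> 'a) \<Rightarrow> real) \<Rightarrow> bool" where
  "group_norm H L \<longleftrightarrow>
     (\<forall>a\<in>H. L a \<ge> 0) \<and> (\<forall>a\<in>H. L a = 0 \<longleftrightarrow> a = id) \<and>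
     (\<forall>a\<in>H. L (inv a) = L a) \<and> (\<forall>a\<in>H. \<forall>b\<in>H. L (a \<circ> b) \<le> L a + L b)"

definition semimetric :: "('a \<Rightarrow> 'a \<Rightarrow> real) \<Rightarrow> bool" where
  "semimetric d \<longleftrightarrow> (\<forall>u v. d u v \<ge> 0) \<and> (\<forall>u. d u u = 0) \<and> (\<forall>u v. d u v = d v u)"

definition dist_L :: "('a::real_normed_vector \<Rightarrow> 'a) set \<Rightarrow> (('a \<Rightarrow> 'a) \<Rightarrow> real) \<Rightarrow> 'a \<Rightarrow> 'a \<Rightarrow> real" where
  "dist_L H L u v = (INF a\<in>H. sqrt ((L a)\<^sup>2 + (norm (a u - v))\<^sup>2))"

end

theory Submission imports Defs begin

lemma coord_bound:
  fixes B :: "'a::real_normed_vector set"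
  assumes fin: "finite B" and ind: "independent B"
  shows "\<exists>C>0. \<forall>c. (\<Sum>b\<in>B. \<bar>c b\<bar>) \<le> C * norm (\<Sum>b\<in>B. c b *\<^sub>R b)"
proof (cases "B = {}")
  case True then show ?thesis by (intro exI[of _ 1]) auto
next
  case False
  then obtain b0 where b0: "b0 \<in> B" by auto
  define K :: "('a \<Rightarrow> real) set" where "K = PiE UNIV (\<lambda>b. if b \<in> B then {-1..1} else {0})"
  have "compactin (product_topology (\<lambda>_. euclidean) UNIV) K"
    unfolding K_def compactin_PiE by auto
  hence cK: "compact K" by (simp add: euclidean_product_topology)
  have coord: "continuous_on A (\<lambda>c::'a\<Rightarrow>real. c b)" for A b
    by (rule continuous_on_subset[OF continuous_on_product_coordinates]) simp
  have cs: "continuous_on A (\<lambda>c::'a\<Rightarrow>real. (\<Sum>b\<in>B. \<bar>c b\<bar>))" for A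
    by (intro continuous_intros coord)
  have cn: "continuous_on A (\<lambda>c::'a\<Rightarrow>real. norm (\<Sum>b\<in>B. c b *\<^sub>R b))" for A
    by (intro continuous_intros coord)
  define S where "S = K \<inter> {c. (\<Sum>b\<in>B. \<bar>c b\<bar>) = 1}"
  have "closed {c::'a\<Rightarrow>real. (\<Sum>b\<in>B. \<bar>c b\<bar>) = 1}"
    by (rule closed_Collect_eq[OF cs]) auto
  hence cS: "compact S" unfolding S_def using cK by blast
  have "(\<lambda>b. if b = b0 then 1 else 0) \<in> S"
    unfolding S_def K_def using b0 fin by (auto simp: sum.delta)
  hence "S \<noteq> {}" by auto
  then obtain c0 where c0: "c0 \<in> S" and min: "\<And>c. c \<in> S \<Longrightarrow> norm (\<Sum>b\<in>B. c0 b *\<^sub>R b) \<le> norm (\<Sum>b\<in>B. c b *\<^sub>R b)"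
    using continuous_attains_inf[OF cS _ cn] by blast
  define m where "m = norm (\<Sum>b\<in>B. c0 b *\<^sub>R b)"
  have "m \<noteq> 0"
  proof
    assume "m = 0"
    hence z: "(\<Sum>b\<in>B. c0 b *\<^sub>R b) = 0" unfolding m_def by simp
    from c0 have "(\<Sum>b\<in>B. \<bar>c0 b\<bar>) = 1" unfolding S_def by auto
    then obtain v where "v \<in> B" "c0 v \<noteq> 0" by (metis (no_types, lifting) sum.neutral abs_zero zero_neq_one)
    with z ind fin show False using dependent_finite by blast
  qed
  hence mpos: "m > 0" unfolding m_def by simp
  show ?thesis
  proof (intro exI[of _ "1/m"] conjI allI)
    show "1/m > 0" using mpos by simp
    fix c :: "'a \<Rightarrow> real"
    define s where "s = (\<Sum>b\<in>B. \<bar>c b\<bar>)"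
    show "(\<Sum>b\<in>B. \<bar>c b\<bar>) \<le> 1/m * norm (\<Sum>b\<in>B. c b *\<^sub>R b)"
    proof (cases "s = 0")
      case True then show ?thesis unfolding s_def using mpos by simp
    next
      case False
      hence spos: "s > 0" unfolding s_def by (metis abs_ge_zero order_le_less sum_nonneg)
      define d where "d = (\<lambda>b. if b \<in> B then c b / s else 0)"
      have "\<bar>c b\<bar> \<le> s" if "b \<in> B" for b
        unfolding s_def using that fin by (intro member_le_sum) auto
      hence "\<bar>c b / s\<bar> \<le> 1" if "b \<in> B" for b using spos that by (simp add: abs_divide)
      have "-1 \<le> c b / s \<and> c b / s \<le> 1" if "b \<in> B" for b
      proof -
        have "\<bar>c b / s\<bar> \<le> 1" using that \<open>\<And>b. b \<in> B \<Longrightarrow> \<bar>c b / s\<bar> \<le> 1\<close> by blast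
        thus ?thesis by arith
      qed
      hence "d \<in> K" unfolding K_def d_def by auto
      moreover have "(\<Sum>b\<in>B. \<bar>d b\<bar>) = 1"
        using spos unfolding d_def s_def
        by (simp add: sum_divide_distrib[symmetric])
      ultimately have "d \<in> S" unfolding S_def by auto
      hence "m \<le> norm (\<Sum>b\<in>B. d b *\<^sub>R b)" using min unfolding m_def by blast
      also have "(\<Sum>b\<in>B. d b *\<^sub>R b) = (1/s) *\<^sub>R (\<Sum>b\<in>B. c b *\<^sub>R b)"
        unfolding d_def scaleR_sum_right by (intro sum.cong) auto
      finally have "m \<le> norm (\<Sum>b\<in>B. c b *\<^sub>R b) / s" using spos by simp
      thus ?thesis unfolding s_def[symmetric] using spos mpos by (simp add: field_simps)
    qed
  qed
qed

lemma finite_subseq: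
  fixes X :: "'b \<Rightarrow> nat \<Rightarrow> real"
  assumes "finite S" "\<And>s. s \<in> S \<Longrightarrow> \<exists>M. \<forall>n. \<bar>X s n\<bar> \<le> M"
  shows "\<exists>r. strict_mono r \<and> (\<forall>s\<in>S. \<exists>l. (X s \<circ> r) \<longlonglongrightarrow> l)"
  using assms
proof (induction S rule: finite_induct)
  case empty
  then show ?case by (intro exI[of _ id]) (auto simp: strict_mono_def)
next
  case (insert t S)
  have "\<exists>r. strict_mono r \<and> (\<forall>s\<in>S. \<exists>l. (X s \<circ> r) \<longlonglongrightarrow> l)"
    by (meson insert.IH insert.prems insertCI)
  then obtain r where r: "strict_mono r" "\<forall>s\<in>S. \<exists>l. (X s \<circ> r) \<longlonglongrightarrow> l" by auto
  obtain M where M: "\<forall>n. \<bar>X t n\<bar> \<le> M" using insert.prems by blast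
  have "seq_compact {-M..M}" by (rule compact_imp_seq_compact) simp
  moreover have "\<forall>n. (X t \<circ> r) n \<in> {-M..M}"
  proof
    fix n
    have "\<bar>X t (r n)\<bar> \<le> M" using M by blast
    thus "(X t \<circ> r) n \<in> {-M..M}" by simp arith
  qed
  ultimately obtain l r' where r': "strict_mono r'" "(X t \<circ> r \<circ> r') \<longlonglongrightarrow> l"
    by (metis seq_compactE)
  show ?case
  proof (intro exI[of _ "r \<circ> r'"] conjI ballI)
    show "strict_mono (r \<circ> r')" using r r' by (simp add: strict_mono_o)
    fix s assume "s \<in> insert t S"
    then show "\<exists>l. (X s \<circ> (r \<circ> r')) \<longlonglongrightarrow> l"
    proof
      assume "s = t" then show ?thesis using r' by (auto simp: o_assoc)
    next
      assume "s \<in> S"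
      then obtain l where "(X s \<circ> r) \<longlonglongrightarrow> l" using r by auto
      from LIMSEQ_subseq_LIMSEQ[OF this r'(1)] show ?thesis by (auto simp: o_assoc)
    qed
  qed
qed

lemma orth_bl: "f \<in> orth_maps \<Longrightarrow> bounded_linear f"
  unfolding orth_maps_def
  by (auto intro!: bounded_linear_intro[where K=1] simp: linear_add linear_scale)

lemma orth_subseq:
  fixes a :: "nat \<Rightarrow> 'a::real_normed_vector \<Rightarrow> 'a" and B :: "'a set"
  assumes fin: "finite B" and ind: "independent B" and sp: "span B = UNIV"
    and orth: "\<And>i. a i \<in> orth_maps"
  shows "\<exists>r g. strict_mono r \<and> g \<in> orth_maps \<and> (\<lambda>i. onorm (\<lambda>x. a (r i) x - g x)) \<longlonglongrightarrow> 0"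
proof -
  obtain C where C: "C > 0" "\<forall>c. (\<Sum>b\<in>B. \<bar>c b\<bar>) \<le> C * norm (\<Sum>b\<in>B. c b *\<^sub>R b)"
    using coord_bound[OF fin ind] by blast
  define R where "R = representation B"
  have rep: "(\<Sum>b\<in>B. R x b *\<^sub>R b) = x" for x
    unfolding R_def using sum_representation_eq[OF ind _ fin subset_refl] sp by auto
  have rb: "(\<Sum>b\<in>B. \<bar>R x b\<bar>) \<le> C * norm x" for x
    using C(2)[rule_format, of "R x"] rep[of x] by simp
  have rb1: "\<bar>R x b\<bar> \<le> C * norm x" if "b \<in> B" for x b
    using member_le_sum[of b B "\<lambda>b. \<bar>R x b\<bar>"] that fin rb[of x] by simp
  have lin: "linear (a i)" and nrm: "norm (a i x) = norm x" for i x
    using orth[of i] unfolding orth_maps_def by auto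
  define X where "X = (\<lambda>(b, b') i. R (a i b) b')"
  have "\<exists>r. strict_mono r \<and> (\<forall>s\<in>B\<times>B. \<exists>l. (X s \<circ> r) \<longlonglongrightarrow> l)"
  proof (rule finite_subseq)
    show "finite (B \<times> B)" using fin by simp
    fix s assume s: "s \<in> B \<times> B"
    show "\<exists>M. \<forall>n. \<bar>X s n\<bar> \<le> M"
    proof (intro exI allI)
      fix n
      obtain b b' where "s = (b, b')" "b' \<in> B" using s by auto
      thus "\<bar>X s n\<bar> \<le> C * norm (fst s)" unfolding X_def using rb1[of b' "a n b"] nrm by simp
    qed
  qed
  then obtain r where r: "strict_mono r" and rl: "\<forall>s\<in>B\<times>B. \<exists>l. (X s \<circ> r) \<longlonglongrightarrow> l" by blast
  define l where "l s = lim (X s \<circ> r)" for s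
  have l: "(X s \<circ> r) \<longlonglongrightarrow> l s" if "s \<in> B \<times> B" for s
    using rl that unfolding l_def by (metis limI)
  define gb where "gb b = (\<Sum>b'\<in>B. l (b, b') *\<^sub>R b')" for b
  have conv_b: "(\<lambda>i. a (r i) b) \<longlonglongrightarrow> gb b" if "b \<in> B" for b
  proof -
    have "(\<lambda>i. \<Sum>b'\<in>B. X (b, b') (r i) *\<^sub>R b') \<longlonglongrightarrow> gb b"
      unfolding gb_def
      by (intro tendsto_intros) (use l that in \<open>auto simp: o_def\<close>)
    moreover have "(\<Sum>b'\<in>B. X (b, b') (r i) *\<^sub>R b') = a (r i) b" for i
      unfolding X_def using rep[of "a (r i) b"] by simp
    ultimately show ?thesis by simp
  qed
  define g where "g x = (\<Sum>b\<in>B. R x b *\<^sub>R gb b)" for x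
  have aexp: "a i x = (\<Sum>b\<in>B. R x b *\<^sub>R a i b)" for i x
  proof -
    have "a i x = a i (\<Sum>b\<in>B. R x b *\<^sub>R b)" using rep[of x] by simp
    also have "\<dots> = (\<Sum>b\<in>B. R x b *\<^sub>R a i b)"
      using lin[of i] by (simp add: linear_sum linear_scale)
    finally show ?thesis .
  qed
  have conv_x: "(\<lambda>i. a (r i) x) \<longlonglongrightarrow> g x" for x
  proof -
    have "(\<lambda>i. \<Sum>b\<in>B. R x b *\<^sub>R a (r i) b) \<longlonglongrightarrow> g x"
      unfolding g_def by (intro tendsto_intros conv_b)
    thus ?thesis by (subst aexp) 
  qed
  have gadd: "g (x + y) = g x + g y" for x y
  proof -
    have "(\<lambda>i. a (r i) (x + y)) \<longlonglongrightarrow> g x + g y"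
      using tendsto_add[OF conv_x[of x] conv_x[of y]] lin by (simp add: linear_add)
    thus ?thesis using conv_x[of "x + y"] LIMSEQ_unique by blast
  qed
  have gscale: "g (c *\<^sub>R x) = c *\<^sub>R g x" for c x
  proof -
    have "(\<lambda>i. a (r i) (c *\<^sub>R x)) \<longlonglongrightarrow> c *\<^sub>R g x"
      using tendsto_scaleR[OF tendsto_const conv_x[of x]] lin by (simp add: linear_scale)
    thus ?thesis using conv_x[of "c *\<^sub>R x"] LIMSEQ_unique by blast
  qed
  have gnorm: "norm (g x) = norm x" for x
  proof -
    have "(\<lambda>i. norm (a (r i) x)) \<longlonglongrightarrow> norm (g x)" by (intro tendsto_intros conv_x)
    hence "(\<lambda>i. norm x) \<longlonglongrightarrow> norm (g x)" using nrm by simp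
    thus ?thesis using LIMSEQ_unique tendsto_const by blast
  qed
  have gO: "g \<in> orth_maps" unfolding orth_maps_def
    using gadd gscale gnorm by (auto intro: linearI)
  define E where "E i = (\<Sum>b\<in>B. norm (a (r i) b - gb b))" for i
  have E0: "E \<longlonglongrightarrow> 0"
  proof -
    have "(\<lambda>i. \<Sum>b\<in>B. norm (a (r i) b - gb b)) \<longlonglongrightarrow> (\<Sum>b\<in>B. 0)"
      by (intro tendsto_sum tendsto_norm_zero) (use conv_b LIM_zero in blast)
    thus ?thesis unfolding E_def by simp
  qed
  have Epos: "E i \<ge> 0" for i unfolding E_def by (simp add: sum_nonneg)
  have bnd: "norm (a (r i) x - g x) \<le> C * E i * norm x" for i x
  proof -
    have "a (r i) x - g x = (\<Sum>b\<in>B. R x b *\<^sub>R (a (r i) b - gb b))"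
      unfolding g_def by (subst aexp) (simp add: sum_subtractf scaleR_diff_right)
    hence "norm (a (r i) x - g x) \<le> (\<Sum>b\<in>B. \<bar>R x b\<bar> * norm (a (r i) b - gb b))"
      by (metis (no_types, lifting) norm_scaleR norm_sum sum.cong)
    also have "\<dots> \<le> (\<Sum>b\<in>B. \<bar>R x b\<bar> * E i)"
    proof (rule sum_mono)
      fix b assume "b \<in> B"
      hence "norm (a (r i) b - gb b) \<le> E i"
        unfolding E_def using fin by (intro member_le_sum) auto
      thus "\<bar>R x b\<bar> * norm (a (r i) b - gb b) \<le> \<bar>R x b\<bar> * E i"
        by (simp add: mult_left_mono)
    qed
    also have "\<dots> = (\<Sum>b\<in>B. \<bar>R x b\<bar>) * E i" by (simp add: sum_distrib_right)
    also have "\<dots> \<le> C * norm x * E i" using rb[of x] Epos by (simp add: mult_right_mono)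
    finally show ?thesis by (simp add: mult_ac)
  qed
  have "(\<lambda>i. onorm (\<lambda>x. a (r i) x - g x)) \<longlonglongrightarrow> 0"
  proof (rule Lim_null_comparison)
    show "(\<lambda>i. C * E i) \<longlonglongrightarrow> 0" using tendsto_mult_right_zero[OF E0] by simp
    show "\<forall>\<^sub>F i in sequentially. norm (onorm (\<lambda>x. a (r i) x - g x)) \<le> C * E i"
    proof (intro always_eventually allI)
      fix i
      have bl: "bounded_linear (\<lambda>x. a (r i) x - g x)"
        using orth_bl[OF orth] orth_bl[OF gO] by (rule bounded_linear_sub)
      have "onorm (\<lambda>x. a (r i) x - g x) \<le> C * E i"
        by (rule onorm_bound) (use C Epos bnd in auto)
      thus "norm (onorm (\<lambda>x. a (r i) x - g x)) \<le> C * E i"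
        using onorm_pos_le[OF bl] by simp
    qed
  qed
  thus ?thesis using r gO by blast
qed

theorem mainTheorem13:
  fixes H :: "('a::real_normed_vector \<Rightarrow> 'a) set"
    and L :: "nat \<Rightarrow> ('a \<Rightarrow> 'a) \<Rightarrow> real"
    and dinf :: "'a \<Rightarrow> 'a \<Rightarrow> real"
    and G0 :: "('a \<Rightarrow> 'a) set"
  assumes fin_dim: "\<exists>B::'a set. finite B \<and> span B = UNIV"
    and H: "subgroup_O H"
    and L: "\<And>i. group_norm H (L i)"
    and conv: "\<And>K. compact K \<Longrightarrow>
        uniform_limit K (\<lambda>i (u, v). dist_L H (L i) u v) (\<lambda>(u, v). dinf u v) sequentially"
    and semi: "semimetric dinf"
    and G0_def: "G0 = {g \<in> orth_maps. \<exists>a::nat \<Rightarrow> 'a \<Rightarrow> 'a. (\<forall>i. a i \<in> H) \<and>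
        (\<lambda>i. onorm (\<lambda>x. a i x - g x)) \<longlonglongrightarrow> 0 \<and>
        liminf (\<lambda>i. ereal (L i (a i))) = 0}"
  shows "\<forall>u v. dinf u v = 0 \<longleftrightarrow> (\<exists>g\<in>G0. v = g u)"
proof -
  have HO: "H \<subseteq> orth_maps" and idH: "id \<in> H" using H unfolding subgroup_O_def by auto
  have Lpos: "L i a \<ge> 0" if "a \<in> H" for i a using L[of i] that unfolding group_norm_def by auto
  have ptw: "(\<lambda>i. dist_L H (L i) u v) \<longlonglongrightarrow> dinf u v" for u v
    using tendsto_uniform_limitI[OF conv[of "{(u, v)}"], of "(u, v)"] by simp
  have bdd: "bdd_below ((\<lambda>a. sqrt ((L i a)\<^sup>2 + (norm (a u - v))\<^sup>2)) ` H)" for i u v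
    by (rule bdd_belowI[of _ 0]) auto
  have dle: "dist_L H (L i) u v \<le> sqrt ((L i a)\<^sup>2 + (norm (a u - v))\<^sup>2)" if "a \<in> H" for i u v a
    unfolding dist_L_def by (rule cINF_lower[OF bdd that])
  obtain B0 :: "'a set" where B0: "finite B0" "span B0 = UNIV" using fin_dim by blast
  obtain B where B: "B \<subseteq> B0" "independent B" "B0 \<subseteq> span B" by (metis basis_exists)
  have finB: "finite B" using B0(1) B(1) finite_subset by blast
  have spB: "span B = UNIV"
  proof -
    have "span B0 \<subseteq> span B" using span_mono[OF B(3)] unfolding span_span .
    thus ?thesis using B0(2) by auto
  qed
  show ?thesis
  proof (intro allI iffI)
    fix u v
    assume "\<exists>g\<in>G0. v = g u"
    then obtain g where gG: "g \<in> G0" and v: "v = g u" by blast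
    from gG obtain a where gO: "g \<in> orth_maps" and aH: "\<forall>i. a i \<in> H"
      and an: "(\<lambda>i. onorm (\<lambda>x. a i x - g x)) \<longlonglongrightarrow> 0"
      and al: "liminf (\<lambda>i. ereal (L i (a i))) = 0"
      unfolding G0_def by blast
    have dpos: "dinf u v \<ge> 0" using semi unfolding semimetric_def by auto
    show "dinf u v = 0"
    proof (rule ccontr)
      assume "dinf u v \<noteq> 0"
      hence d: "dinf u v > 0" using dpos by simp
      define e where "e = dinf u v / 4"
      have e: "e > 0" unfolding e_def using d by simp
      have ev1: "\<forall>\<^sub>F i in sequentially. dist_L H (L i) u v > dinf u v / 2"
        using order_tendstoD(1)[OF ptw[of u v], of "dinf u v / 2"] d by simp
      have t2: "(\<lambda>i. onorm (\<lambda>x. a i x - g x) * norm u) \<longlonglongrightarrow> 0"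
        using tendsto_mult_left_zero[OF an] by simp
      have ev2: "\<forall>\<^sub>F i in sequentially. onorm (\<lambda>x. a i x - g x) * norm u < e"
        by (rule order_tendstoD(2)[OF t2 e])
      have "\<not> (ereal e \<le> liminf (\<lambda>i. ereal (L i (a i))))" using al e by simp
      hence "\<not> (\<forall>y<ereal e. \<forall>\<^sub>F i in sequentially. y < ereal (L i (a i)))"
        by (subst (asm) le_Liminf_iff)
      then obtain y where y: "y < ereal e" "\<not> (\<forall>\<^sub>F i in sequentially. y < ereal (L i (a i)))"
        by blast
      have "\<exists>i. (dist_L H (L i) u v > dinf u v / 2 \<and> onorm (\<lambda>x. a i x - g x) * norm u < e)
                 \<and> \<not> (y < ereal (L i (a i)))"
      proof (rule ccontr)
        assume nt: "\<not> ?thesis"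
        have "\<forall>\<^sub>F i in sequentially. y < ereal (L i (a i))"
        proof (rule eventually_mono[OF eventually_conj[OF ev1 ev2]])
          fix i assume "dist_L H (L i) u v > dinf u v / 2 \<and> onorm (\<lambda>x. a i x - g x) * norm u < e"
          thus "y < ereal (L i (a i))" using nt by blast
        qed
        with y show False by blast
      qed
      then obtain i where i1: "dist_L H (L i) u v > dinf u v / 2"
        and i2: "onorm (\<lambda>x. a i x - g x) * norm u < e" and i3: "\<not> (y < ereal (L i (a i)))" by blast
      from i3 have "ereal (L i (a i)) \<le> y" by simp
      hence "ereal (L i (a i)) < ereal e" using y(1) by (rule le_less_trans)
      hence Li: "L i (a i) < e" by simp
      have bl: "bounded_linear (\<lambda>x. a i x - g x)"
        by (rule bounded_linear_sub[OF orth_bl orth_bl[OF gO]]) (use aH HO in auto)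
      have nu: "norm (a i u - v) \<le> onorm (\<lambda>x. a i x - g x) * norm u"
        using onorm[OF bl, of u] unfolding v .
      have L0: "0 \<le> L i (a i)" using Lpos aH by blast
      have "dist_L H (L i) u v \<le> sqrt ((L i (a i))\<^sup>2 + (norm (a i u - v))\<^sup>2)"
        by (rule dle) (simp add: aH)
      also have "\<dots> \<le> \<bar>L i (a i)\<bar> + \<bar>norm (a i u - v)\<bar>" by (rule sqrt_sum_squares_le_sum_abs)
      also have "\<dots> = L i (a i) + norm (a i u - v)" using L0 by simp
      also have "\<dots> < e + e" using Li nu i2 by linarith
      finally have "dist_L H (L i) u v < e + e" .
      thus False using i1 unfolding e_def by linarith
    qed
  next
    fix u v
    assume d0: "dinf u v = 0"
    define D where "D i = dist_L H (L i) u v" for i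
    have D0: "D \<longlonglongrightarrow> 0" unfolding D_def using ptw[of u v] d0 by simp
    have "\<exists>a\<in>H. sqrt ((L i a)\<^sup>2 + (norm (a u - v))\<^sup>2) < D i + 1 / Suc i" for i
    proof -
      have "Inf ((\<lambda>a. sqrt ((L i a)\<^sup>2 + (norm (a u - v))\<^sup>2)) ` H) < D i + 1 / Suc i"
        unfolding D_def dist_L_def by simp
      moreover have "H \<noteq> {}" using idH by blast
      ultimately show ?thesis using cINF_less_iff[OF _ bdd] by simp
    qed
    hence "\<forall>i. \<exists>a. a \<in> H \<and> sqrt ((L i a)\<^sup>2 + (norm (a u - v))\<^sup>2) < D i + 1 / Suc i" by blast
    then obtain a where a: "\<forall>i. a i \<in> H \<and> sqrt ((L i (a i))\<^sup>2 + (norm (a i u - v))\<^sup>2) < D i + 1 / Suc i"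
      by (rule choice[THEN exE])
    have aH: "\<And>i. a i \<in> H" using a by blast
    have aq: "\<And>i. sqrt ((L i (a i))\<^sup>2 + (norm (a i u - v))\<^sup>2) < D i + 1 / Suc i" using a by blast
    define Q where "Q i = sqrt ((L i (a i))\<^sup>2 + (norm (a i u - v))\<^sup>2)" for i
    have Q0: "Q \<longlonglongrightarrow> 0"
    proof (rule Lim_null_comparison)
      show "(\<lambda>i. D i + 1 / Suc i) \<longlonglongrightarrow> 0"
        using tendsto_add[OF D0 LIMSEQ_inverse_real_of_nat] by (simp add: inverse_eq_divide)
      show "\<forall>\<^sub>F i in sequentially. norm (Q i) \<le> D i + 1 / Suc i"
      proof (intro always_eventually allI)
        fix i
        show "norm (Q i) \<le> D i + 1 / Suc i"
          using less_imp_le[OF aq[of i]] unfolding Q_def by simp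
      qed
    qed
    have La0: "(\<lambda>i. L i (a i)) \<longlonglongrightarrow> 0"
    proof (rule Lim_null_comparison[OF _ Q0])
      show "\<forall>\<^sub>F i in sequentially. norm (L i (a i)) \<le> Q i"
        using Lpos aH unfolding Q_def by auto
    qed
    have au: "(\<lambda>i. a i u) \<longlonglongrightarrow> v"
    proof -
      have "(\<lambda>i. a i u - v) \<longlonglongrightarrow> 0"
      proof (rule Lim_null_comparison[OF _ Q0])
        show "\<forall>\<^sub>F i in sequentially. norm (a i u - v) \<le> Q i"
          unfolding Q_def by auto
      qed
      thus ?thesis by (rule LIM_zero_cancel)
    qed
    have aO: "\<And>i. a i \<in> orth_maps" using aH HO by blast
    obtain r g where rgall: "strict_mono r \<and> g \<in> orth_maps \<and> (\<lambda>i. onorm (\<lambda>x. a (r i) x - g x)) \<longlonglongrightarrow> 0"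
      using orth_subseq[where a=a, OF finB B(2) spB aO] by (elim exE) (rule that)
    have r: "strict_mono r" and gO: "g \<in> orth_maps"
      and rg: "(\<lambda>i. onorm (\<lambda>x. a (r i) x - g x)) \<longlonglongrightarrow> 0" using rgall by auto
    have bl: "bounded_linear (\<lambda>x. a j x - g x)" for j
      by (rule bounded_linear_sub[OF orth_bl[OF aO] orth_bl[OF gO]])
    have "(\<lambda>i. a (r i) u - g u) \<longlonglongrightarrow> 0"
    proof (rule Lim_null_comparison)
      show "(\<lambda>i. onorm (\<lambda>x. a (r i) x - g x) * norm u) \<longlonglongrightarrow> 0"
        using tendsto_mult_left_zero[OF rg] by simp
      show "\<forall>\<^sub>F i in sequentially. norm (a (r i) u - g u) \<le> onorm (\<lambda>x. a (r i) x - g x) * norm u"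
        by (intro always_eventually allI) (rule onorm[OF bl])
    qed
    hence "(\<lambda>i. a (r i) u) \<longlonglongrightarrow> g u" by (rule LIM_zero_cancel)
    moreover have "(\<lambda>i. a (r i) u) \<longlonglongrightarrow> v" using LIMSEQ_subseq_LIMSEQ[OF au r] by (simp add: o_def)
    ultimately have "g u = v" by (rule LIMSEQ_unique)
    hence vg: "v = g u" by simp
    define b where "b i = (if i \<in> range r then a i else a (r i))" for i
    have bH: "\<forall>i. b i \<in> H" unfolding b_def using aH by simp
    have bn: "(\<lambda>i. onorm (\<lambda>x. b i x - g x)) \<longlonglongrightarrow> 0"
    proof (rule LIMSEQ_I)
      fix \<epsilon> :: real assume "\<epsilon> > 0"
      then obtain N where N: "\<And>n. n \<ge> N \<Longrightarrow> norm (onorm (\<lambda>x. a (r n) x - g x)) < \<epsilon>"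
        using LIMSEQ_D[OF rg \<open>\<epsilon> > 0\<close>] by auto
      show "\<exists>N. \<forall>n\<ge>N. norm (onorm (\<lambda>x. b n x - g x) - 0) < \<epsilon>"
      proof (intro exI allI impI)
        fix n assume n: "n \<ge> r N"
        show "norm (onorm (\<lambda>x. b n x - g x) - 0) < \<epsilon>"
        proof (cases "n \<in> range r")
          case True
          then obtain k where k: "n = r k" by auto
          hence "k \<ge> N" using n r by (simp add: strict_mono_less_eq)
          thus ?thesis using N[of k] True k unfolding b_def by simp
        next
          case False
          have "n \<ge> N" using n seq_suble[OF r, of N] by simp
          thus ?thesis using N[of n] False unfolding b_def by simp
        qed
      qed
    qed
    have bl0: "liminf (\<lambda>i. ereal (L i (b i))) = 0"
    proof (rule antisym)
      have "liminf (\<lambda>i. ereal (L i (b i))) \<le> liminf ((\<lambda>i. ereal (L i (b i))) \<circ> r)"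
        by (rule liminf_subseq_mono[OF r])
      also have "(\<lambda>i. ereal (L i (b i))) \<circ> r = (\<lambda>k. ereal (L (r k) (a (r k))))"
        unfolding b_def by (auto simp: o_def)
      also have "liminf (\<lambda>k. ereal (L (r k) (a (r k)))) = 0"
      proof (rule lim_imp_Liminf)
        show "\<not> trivial_limit (sequentially :: nat filter)" by simp
        have "(\<lambda>k. L (r k) (a (r k))) \<longlonglongrightarrow> 0"
          using LIMSEQ_subseq_LIMSEQ[OF La0 r] by (simp add: o_def)
        thus "(\<lambda>k. ereal (L (r k) (a (r k)))) \<longlonglongrightarrow> 0"
          using lim_ereal[of "\<lambda>k. L (r k) (a (r k))" 0 sequentially] by (simp add: zero_ereal_def)
      qed
      finally show "liminf (\<lambda>i. ereal (L i (b i))) \<le> 0" .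
      show "0 \<le> liminf (\<lambda>i. ereal (L i (b i)))"
        by (rule Liminf_bounded) (use Lpos bH in auto)
    qed
    have "g \<in> G0" unfolding G0_def using gO bH bn bl0 by (intro CollectI conjI exI[of _ b]) auto
    thus "\<exists>g\<in>G0. v = g u" using vg by blast
  qed
qed

end
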